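(* Let $F_1,F_2:\mathbb{R}^n\rightrightarrows\mathbb{R}^p$ be nearly convex set-valued mappings with $\operatorname{ri}(\operatorname{dom} F_1)\cap\operatorname{ri}(\operatorname{dom} F_2)\neq\emptyset$. Then $$\operatorname{ri}\big(\operatorname{gph}(F_1+F_2)\big)=\{(x,y)\in\mathbb{R}^n\times\mathbb{R}^p: x\in\operatorname{ri}(\operatorname{dom} F_1)\cap\operatorname{ri}(\operatorname{dom} F_2),\ y\in\operatorname{ri} F_1(x)+\operatorname{ri} F_2(x)\}.$$
   Context: A set $\Omega\subset\mathbb{R}^k$ is nearly convex if there is a convex set $C$ with $C\subset\Omega\subset\overline{C}$. For an arbitrary set $\Omega$, $\operatorname{ri}\Omega=\{a\in\Omega:\exists\delta>0,\ B(a;\delta)\cap\operatorname{aff}\Omega\subset\Omega\}$. For $F:\mathbb{R}^n\rightrightarrows\mathbb{R}^p$: $\operatorname{dom} F=\{x:F(x)\neq\emptyset\}$, $\operatorname{gph} F=\{(x,y):y\in F(x)\}$; $F$ is nearly convex if $\operatorname{gph} F$ is nearly convex. $(F_1+F_2)(x)=F_1(x)+F_2(x)$ (Minkowski sum, empty if either summand is empty). *)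

theory Defs
  imports "HOL-Analysis.Analysis"
begin

definition nearly_convex :: "'a::real_normed_vector set \<Rightarrow> bool" where
  "nearly_convex \<Omega> \<longleftrightarrow> (\<exists>C. convex C \<and> C \<subseteq> \<Omega> \<and> \<Omega> \<subseteq> closure C)"

definition sv_dom :: "('a \<Rightarrow> 'b set) \<Rightarrow> 'a set" where
  "sv_dom F = {x. F x \<noteq> {}}"

definition sv_gph :: "('a \<Rightarrow> 'b set) \<Rightarrow> ('a \<times> 'b) set" where
  "sv_gph F = {(x, y). y \<in> F x}"

definition sv_sum :: "('a \<Rightarrow> 'b::plus set) \<Rightarrow> ('a \<Rightarrow> 'b set) \<Rightarrow> 'a \<Rightarrow> 'b set" where
  "sv_sum F1 F2 x = {y1 + y2 | y1 y2. y1 \<in> F1 x \<and> y2 \<in> F2 x}"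

end

theory Submission imports Defs begin

lemma nc_ri:
  fixes C W :: "'a::euclidean_space set"
  assumes "convex C" "C \<subseteq> W" "W \<subseteq> closure C"
  shows "rel_interior W = rel_interior C"
proof -
  have ah: "affine hull W = affine hull C"
  proof (rule subset_antisym)
    have "affine hull W \<subseteq> affine hull (closure C)" using assms(3) by (rule hull_mono)
    then show "affine hull W \<subseteq> affine hull C" by simp
    show "affine hull C \<subseteq> affine hull W" using assms(2) by (rule hull_mono)
  qed
  have "rel_interior C \<subseteq> rel_interior W" using rel_interior_mono[OF assms(2)] ah by simp
  moreover have "rel_interior W \<subseteq> rel_interior (closure C)"
    using rel_interior_mono[OF assms(3)] ah by simp
  ultimately show ?thesis using convex_rel_interior_closure[OF assms(1)] by blast
qed

lemma nc_proj:
  fixes G C :: "('a::euclidean_space \<times> 'b::euclidean_space) set"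
  assumes cC: "convex C" and CG: "C \<subseteq> G" and GC: "G \<subseteq> closure C"
  shows "(x,y) \<in> rel_interior G \<longleftrightarrow> x \<in> rel_interior (fst ` G) \<and> y \<in> rel_interior {y. (x,y)\<in>G}"
proof -
  have riG: "rel_interior G = rel_interior C" using nc_ri[OF assms] .
  have "fst ` G \<subseteq> fst ` closure C" using GC by blast
  also have "\<dots> \<subseteq> closure (fst ` C)"
    by (rule closure_bounded_linear_image_subset[OF bounded_linear_fst])
  finally have fGC: "fst ` G \<subseteq> closure (fst ` C)" .
  have ridom: "rel_interior (fst ` G) = rel_interior (fst ` C)"
    by (rule nc_ri[OF convex_linear_image[OF linear_fst cC] image_mono[OF CG] fGC])
  have domC: "{x. {z. (x,z)\<in>C} \<noteq> {}} = fst ` C"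
  proof
    show "{x. {z. (x,z)\<in>C} \<noteq> {}} \<subseteq> fst ` C" using image_iff by fastforce
    show "fst ` C \<subseteq> {x. {z. (x,z)\<in>C} \<noteq> {}}" by auto
  qed
  have proj: "(x,y)\<in>rel_interior C \<longleftrightarrow> x \<in> rel_interior (fst ` C) \<and> y\<in>rel_interior{z.(x,z)\<in>C}"
    using rel_interior_projection[OF cC refl, of x y] unfolding domC .
  have fib: "rel_interior{y.(x,y)\<in>G} = rel_interior{z.(x,z)\<in>C}" if x: "x \<in> rel_interior (fst ` C)"
  proof -
    define M where "M = {z::'a\<times>'b. fst z = x}"
    have aM: "affine M" unfolding M_def affine_def apply clarify apply simp
      by (metis scaleR_add_left scaleR_one)
    have Cx: "{z.(x,z)\<in>C} = snd ` (C \<inter> M)"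
    proof
      show "{z.(x,z)\<in>C} \<subseteq> snd ` (C \<inter> M)"
      proof
        fix z assume "z \<in> {z.(x,z)\<in>C}"
        then have "(x,z) \<in> C \<inter> M" unfolding M_def by simp
        then show "z \<in> snd ` (C \<inter> M)" by (metis image_eqI snd_conv)
      qed
      show "snd ` (C \<inter> M) \<subseteq> {z.(x,z)\<in>C}" unfolding M_def by auto
    qed
    have cCx: "convex {z.(x,z)\<in>C}" unfolding Cx
      by (intro convex_linear_image linear_snd convex_Int cC affine_imp_convex aM)
    have "x \<in> fst ` rel_interior C" using x rel_interior_convex_linear_image[OF linear_fst cC] by simp
    then obtain q where "q \<in> rel_interior C" "fst q = x" by blast
    then have ne: "rel_interior C \<inter> M \<noteq> {}" unfolding M_def by blast
    have clI: "closure (C \<inter> M) = closure C \<inter> M" by (rule convex_affine_closure_Int[OF cC aM ne])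
    have "{y.(x,y)\<in>G} \<subseteq> closure {z.(x,z)\<in>C}"
    proof
      fix y assume "y \<in> {y.(x,y)\<in>G}"
      then have "(x,y) \<in> closure C" using GC by blast
      then have "(x,y) \<in> closure C \<inter> M" unfolding M_def by simp
      then have "(x,y) \<in> closure (C \<inter> M)" using clI by simp
      then have "snd (x,y) \<in> snd ` closure (C \<inter> M)" by blast
      also have "\<dots> \<subseteq> closure (snd ` (C \<inter> M))"
        by (rule closure_bounded_linear_image_subset[OF bounded_linear_snd])
      finally show "y \<in> closure {z.(x,z)\<in>C}" unfolding Cx by simp
    qed
    moreover have "{z.(x,z)\<in>C} \<subseteq> {y.(x,y)\<in>G}" using CG by blast
    ultimately show ?thesis using nc_ri[OF cCx] by blast
  qed
  show ?thesis
  proof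
    assume "(x,y) \<in> rel_interior G"
    then have "(x,y) \<in> rel_interior C" using riG by simp
    then have "x \<in> rel_interior (fst ` C)" "y\<in>rel_interior{z.(x,z)\<in>C}" using proj by auto
    then show "x \<in> rel_interior (fst ` G) \<and> y \<in> rel_interior {y. (x,y)\<in>G}"
      using ridom fib by simp
  next
    assume "x \<in> rel_interior (fst ` G) \<and> y \<in> rel_interior {y. (x,y)\<in>G}"
    then have "x \<in> rel_interior (fst ` C)" "y\<in>rel_interior{z.(x,z)\<in>C}" using ridom fib by auto
    then show "(x,y) \<in> rel_interior G" using proj riG by simp
  qed
qed

lemma nc_dom:
  fixes G C :: "('a::euclidean_space \<times> 'b::euclidean_space) set"
  assumes cC: "convex C" and CG: "C \<subseteq> G" and GC: "G \<subseteq> closure C"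
  shows "rel_interior (fst ` G) = fst ` rel_interior G"
proof -
  have riG: "rel_interior G = rel_interior C" using nc_ri[OF assms] .
  have "fst ` G \<subseteq> fst ` closure C" using GC by blast
  also have "\<dots> \<subseteq> closure (fst ` C)"
    by (rule closure_bounded_linear_image_subset[OF bounded_linear_fst])
  finally have fGC: "fst ` G \<subseteq> closure (fst ` C)" .
  have ridom: "rel_interior (fst ` G) = rel_interior (fst ` C)"
    by (rule nc_ri[OF convex_linear_image[OF linear_fst cC] image_mono[OF CG] fGC])
  show ?thesis using ridom riG rel_interior_convex_linear_image[OF linear_fst cC] by simp
qed

lemma sv_dom_fst: "sv_dom F = fst ` sv_gph F"
  unfolding sv_dom_def sv_gph_def by force

lemma sv_fib: "{y. (x,y) \<in> sv_gph F} = F x"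
  unfolding sv_gph_def by simp

theorem theorem3p7:
  fixes F1 F2 :: "'n::euclidean_space \<Rightarrow> 'p::euclidean_space set"
  assumes "nearly_convex (sv_gph F1)" and "nearly_convex (sv_gph F2)"
    and "rel_interior (sv_dom F1) \<inter> rel_interior (sv_dom F2) \<noteq> {}"
  shows "rel_interior (sv_gph (sv_sum F1 F2)) =
    {(x, y). x \<in> rel_interior (sv_dom F1) \<inter> rel_interior (sv_dom F2) \<and>
       y \<in> {y1 + y2 | y1 y2. y1 \<in> rel_interior (F1 x) \<and> y2 \<in> rel_interior (F2 x)}}"
proof -
  define G1 where "G1 = sv_gph F1"
  define G2 where "G2 = sv_gph F2"
  obtain C1 where cC1: "convex C1" and C1G: "C1 \<subseteq> G1" and G1C: "G1 \<subseteq> closure C1"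
    using assms(1) unfolding nearly_convex_def G1_def by blast
  obtain C2 where cC2: "convex C2" and C2G: "C2 \<subseteq> G2" and G2C: "G2 \<subseteq> closure C2"
    using assms(2) unfolding nearly_convex_def G2_def by blast
  have ri1: "(x,y) \<in> rel_interior G1 \<longleftrightarrow> x \<in> rel_interior (sv_dom F1) \<and> y \<in> rel_interior (F1 x)" for x y
    using nc_proj[OF cC1 C1G G1C, of x y] unfolding G1_def sv_fib sv_dom_fst by simp
  have ri2: "(x,y) \<in> rel_interior G2 \<longleftrightarrow> x \<in> rel_interior (sv_dom F2) \<and> y \<in> rel_interior (F2 x)" for x y
    using nc_proj[OF cC2 C2G G2C, of x y] unfolding G2_def sv_fib sv_dom_fst by simp
  have rG1: "rel_interior G1 = rel_interior C1" using nc_ri[OF cC1 C1G G1C] .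
  have rG2: "rel_interior G2 = rel_interior C2" using nc_ri[OF cC2 C2G G2C] .
  obtain x0 where x0: "x0 \<in> rel_interior (sv_dom F1)" "x0 \<in> rel_interior (sv_dom F2)"
    using assms(3) by blast
  have "x0 \<in> fst ` rel_interior C1"
    using x0(1) nc_dom[OF cC1 C1G G1C] rG1 unfolding sv_dom_fst G1_def by simp
  then obtain y1 where y1: "(x0,y1) \<in> rel_interior C1" by auto
  have "x0 \<in> fst ` rel_interior C2"
    using x0(2) nc_dom[OF cC2 C2G G2C] rG2 unfolding sv_dom_fst G2_def by simp
  then obtain y2 where y2: "(x0,y2) \<in> rel_interior C2" by auto
  define P1 :: "'n \<times> 'p \<times> 'p \<Rightarrow> 'n \<times> 'p" where "P1 = (\<lambda>z. (fst z, fst (snd z)))"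
  define P2 :: "'n \<times> 'p \<times> 'p \<Rightarrow> 'n \<times> 'p" where "P2 = (\<lambda>z. (fst z, snd (snd z)))"
  define L :: "'n \<times> 'p \<times> 'p \<Rightarrow> 'n \<times> 'p" where "L = (\<lambda>z. (fst z, fst (snd z) + snd (snd z)))"
  define h1 :: "('n \<times> 'p) \<times> 'p \<Rightarrow> 'n \<times> 'p \<times> 'p" where "h1 = (\<lambda>(a,b). (fst a, snd a, b))"
  define h2 :: "('n \<times> 'p) \<times> 'p \<Rightarrow> 'n \<times> 'p \<times> 'p" where "h2 = (\<lambda>(a,b). (fst a, b, snd a))"
  have lP1: "linear P1" unfolding P1_def linear_iff by (simp add: algebra_simps)
  have lP2: "linear P2" unfolding P2_def linear_iff by (simp add: algebra_simps)
  have lL: "linear L" unfolding L_def linear_iff by (simp add: algebra_simps)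
  have lh1: "linear h1" unfolding h1_def linear_iff by (simp add: algebra_simps split: prod.splits)
  have lh2: "linear h2" unfolding h2_def linear_iff by (simp add: algebra_simps split: prod.splits)
  define A where "A = P1 -` C1 \<inter> P2 -` C2"
  define S where "S = P1 -` G1 \<inter> P2 -` G2"
  have cA1: "convex (P1 -` C1)" by (rule convex_linear_vimage[OF lP1 cC1])
  have cA2: "convex (P2 -` C2)" by (rule convex_linear_vimage[OF lP2 cC2])
  have cA: "convex A" unfolding A_def using cA1 cA2 by (rule convex_Int)
  have w1: "(x0,y1,y2) \<in> P1 -` rel_interior C1" using y1 unfolding P1_def by simp
  have w2: "(x0,y1,y2) \<in> P2 -` rel_interior C2" using y2 unfolding P2_def by simp
  have rA1: "rel_interior (P1 -` C1) = P1 -` rel_interior C1"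
    using rel_interior_convex_linear_preimage[OF lP1 cC1] w1 by blast
  have rA2: "rel_interior (P2 -` C2) = P2 -` rel_interior C2"
    using rel_interior_convex_linear_preimage[OF lP2 cC2] w2 by blast
  have neA: "rel_interior (P1 -` C1) \<inter> rel_interior (P2 -` C2) \<noteq> {}"
    using w1 w2 rA1 rA2 by blast
  have rA: "rel_interior A = P1 -` rel_interior C1 \<inter> P2 -` rel_interior C2"
    unfolding A_def using convex_rel_interior_inter_two[OF cA1 cA2 neA] rA1 rA2 by simp
  have clA: "closure A = closure (P1 -` C1) \<inter> closure (P2 -` C2)"
    unfolding A_def by (rule closure_Int_convex[OF cA1 cA2 neA])
  have cl1: "P1 -` closure C1 \<subseteq> closure (P1 -` C1)"
  proof
    fix z assume z: "z \<in> P1 -` closure C1"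
    have "z = h1 (P1 z, snd (snd z))" unfolding h1_def P1_def by simp
    also have "\<dots> \<in> h1 ` closure (C1 \<times> UNIV)" using z by (simp add: closure_Times)
    also have "\<dots> \<subseteq> closure (h1 ` (C1 \<times> UNIV))" by (rule closure_linear_image_subset[OF lh1])
    also have "\<dots> \<subseteq> closure (P1 -` C1)"
      by (rule closure_mono) (auto simp: h1_def P1_def)
    finally show "z \<in> closure (P1 -` C1)" .
  qed
  have cl2: "P2 -` closure C2 \<subseteq> closure (P2 -` C2)"
  proof
    fix z assume z: "z \<in> P2 -` closure C2"
    have "z = h2 (P2 z, fst (snd z))" unfolding h2_def P2_def by simp
    also have "\<dots> \<in> h2 ` closure (C2 \<times> UNIV)" using z by (simp add: closure_Times)
    also have "\<dots> \<subseteq> closure (h2 ` (C2 \<times> UNIV))" by (rule closure_linear_image_subset[OF lh2])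
    also have "\<dots> \<subseteq> closure (P2 -` C2)"
      by (rule closure_mono) (auto simp: h2_def P2_def)
    finally show "z \<in> closure (P2 -` C2)" .
  qed
  have AS: "A \<subseteq> S" unfolding A_def S_def using C1G C2G by blast
  have SA: "S \<subseteq> closure A" unfolding clA S_def using G1C G2C cl1 cl2 by blast
  have LA: "L ` A \<subseteq> L ` S" using AS by blast
  have LS: "L ` S \<subseteq> closure (L ` A)"
    using image_mono[OF SA, of L] closure_linear_image_subset[OF lL, of A] by blast
  have cLA: "convex (L ` A)" by (rule convex_linear_image[OF lL cA])
  have gph: "sv_gph (sv_sum F1 F2) = L ` S"
  proof
    show "sv_gph (sv_sum F1 F2) \<subseteq> L ` S"
    proof
      fix p assume "p \<in> sv_gph (sv_sum F1 F2)"
      then obtain x a b where p: "p = (x, a + b)" "a \<in> F1 x" "b \<in> F2 x"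
        unfolding sv_gph_def sv_sum_def by auto
      then have "(x,a,b) \<in> S" unfolding S_def P1_def P2_def G1_def G2_def sv_gph_def by simp
      moreover have "p = L (x,a,b)" using p unfolding L_def by simp
      ultimately show "p \<in> L ` S" by blast
    qed
    show "L ` S \<subseteq> sv_gph (sv_sum F1 F2)"
      unfolding S_def P1_def P2_def G1_def G2_def sv_gph_def sv_sum_def L_def by auto
  qed
  have "rel_interior (sv_gph (sv_sum F1 F2)) = rel_interior (L ` A)"
    unfolding gph by (rule nc_ri[OF cLA LA LS])
  also have "\<dots> = L ` rel_interior A"
    using rel_interior_convex_linear_image[OF lL cA] by simp
  also have "\<dots> = L ` (P1 -` rel_interior G1 \<inter> P2 -` rel_interior G2)"
    unfolding rA rG1 rG2 ..
  also have "\<dots> = {(x, y). x \<in> rel_interior (sv_dom F1) \<inter> rel_interior (sv_dom F2) \<and>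
       y \<in> {y1 + y2 | y1 y2. y1 \<in> rel_interior (F1 x) \<and> y2 \<in> rel_interior (F2 x)}}" (is "_ = ?rhs")
  proof
    show "L ` (P1 -` rel_interior G1 \<inter> P2 -` rel_interior G2) \<subseteq> ?rhs"
    proof
      fix p assume "p \<in> L ` (P1 -` rel_interior G1 \<inter> P2 -` rel_interior G2)"
      then obtain x a b where "p = L (x,a,b)" "(x,a) \<in> rel_interior G1" "(x,b) \<in> rel_interior G2"
        unfolding P1_def P2_def by auto
      then show "p \<in> ?rhs" unfolding L_def using ri1 ri2 by auto
    qed
    show "?rhs \<subseteq> L ` (P1 -` rel_interior G1 \<inter> P2 -` rel_interior G2)"
    proof
      fix p assume "p \<in> ?rhs"
      then obtain x a b where p: "p = (x, a + b)" "x \<in> rel_interior (sv_dom F1)"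
        "x \<in> rel_interior (sv_dom F2)" "a \<in> rel_interior (F1 x)" "b \<in> rel_interior (F2 x)"
        by blast
      then have "(x,a,b) \<in> P1 -` rel_interior G1 \<inter> P2 -` rel_interior G2"
        unfolding P1_def P2_def using ri1 ri2 by simp
      moreover have "p = L (x,a,b)" using p unfolding L_def by simp
      ultimately show "p \<in> L ` (P1 -` rel_interior G1 \<inter> P2 -` rel_interior G2)" by blast
    qed
  qed
  finally show ?thesis .
qed

end
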